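(* For all positive integers $n$ and every $2$-homogeneous polynomial $P(x)=\sum_{|\alpha|=2}a_\alpha\mathbf{x}^\alpha$ on $\ell_2^n$ (over $\mathbb{K}=\mathbb{R}$ or $\mathbb{C}$), \[ \max_{|\alpha|=2}|a_\alpha|\leq 4\sqrt2\,\|P\|. \] Moreover, this is optimal in the following sense: for every $r<\infty$ there is no constant $C\ge1$ (independent of $n$) such that $\big(\sum_{|\alpha|=2}|a_\alpha|^r\big)^{1/r}\le C\|P\|$ for all $2$-homogeneous polynomials $P=\sum_{|\alpha|=2}a_\alpha\mathbf{x}^\alpha$ on $\ell_2^n$ and all $n$.
   Context: $\mathbb{K}$ denotes $\mathbb{R}$ or $\mathbb{C}$. For $\alpha\in\mathbb{N}^n$, $|\alpha|=\alpha_1+\cdots+\alpha_n$ and $\mathbf{x}^\alpha=x_1^{\alpha_1}\cdots x_n^{\alpha_n}$. $\ell_p^n$ is $\mathbb{K}^n$ with the $p$-norm, and for a polynomial $P$ on $\ell_p^n$, $\|P\|=\sup\{|P(x)|:\|x\|_p\le1\}$. *)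

theory Defs
  imports "HOL-Analysis.Analysis"
begin

definition mindex2 :: "nat \<Rightarrow> (nat \<Rightarrow> nat) set" where
  "mindex2 n = {\<alpha>. (\<forall>i. n \<le> i \<longrightarrow> \<alpha> i = 0) \<and> (\<Sum>i<n. \<alpha> i) = 2}"

definition hpoly2 :: "nat \<Rightarrow> ((nat \<Rightarrow> nat) \<Rightarrow> 'a::real_normed_field) \<Rightarrow> (nat \<Rightarrow> 'a) \<Rightarrow> 'a" where
  "hpoly2 n a x = (\<Sum>\<alpha>\<in>mindex2 n. a \<alpha> * (\<Prod>i<n. x i ^ \<alpha> i))"

definition polynorm :: "nat \<Rightarrow> ((nat \<Rightarrow> nat) \<Rightarrow> 'a::real_normed_field) \<Rightarrow> real" where
  "polynorm n a = (SUP x\<in>{x::nat \<Rightarrow> 'a. sqrt (\<Sum>i<n. (norm (x i))\<^sup>2) \<le> 1}. norm (hpoly2 n a x))"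

end

theory Submission
  imports Defs
begin


lemma mindex2_le: "\<alpha> \<in> mindex2 n \<Longrightarrow> i < n \<Longrightarrow> \<alpha> i \<le> 2"
  unfolding mindex2_def using member_le_sum[of i "{..<n}" \<alpha>] by auto

lemma finite_mindex2: "finite (mindex2 n)"
proof -
  let ?R = "\<lambda>\<alpha>. restrict \<alpha> {..<n}"
  have "inj_on ?R (mindex2 n)"
  proof (rule inj_onI)
    fix \<alpha> \<beta> assume a: "\<alpha> \<in> mindex2 n" "\<beta> \<in> mindex2 n" "?R \<alpha> = ?R \<beta>"
    show "\<alpha> = \<beta>"
    proof
      fix i show "\<alpha> i = \<beta> i"
      proof (cases "i < n")
        case True then show ?thesis using fun_cong[OF a(3), of i] by simp
      next
        case False then show ?thesis using a(1,2) by (simp add: mindex2_def)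
      qed
    qed
  qed
  moreover have "?R ` mindex2 n \<subseteq> PiE {..<n} (\<lambda>_. {..2::nat})"
    using mindex2_le by (auto simp: PiE_def)
  moreover have "finite (PiE {..<n} (\<lambda>_. {..2::nat}))" by (simp add: finite_PiE)
  ultimately show ?thesis by (meson finite_imageD finite_subset)
qed

lemma mindex2_two:
  assumes "\<beta> \<in> mindex2 n" "i < n" "j < n" "\<forall>k<n. k \<noteq> i \<and> k \<noteq> j \<longrightarrow> \<beta> k = 0"
  shows "(if i = j then \<beta> i else \<beta> i + \<beta> j) = 2"
proof -
  have "(\<Sum>k<n. \<beta> k) = (\<Sum>k\<in>{i,j}. \<beta> k)"
    by (rule sum.mono_neutral_right) (use assms in auto)
  then show ?thesis using assms(1) by (auto simp: mindex2_def)
qed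

definition e2 :: "nat \<Rightarrow> nat \<Rightarrow> nat" where "e2 i = (\<lambda>k. if k = i then 2 else 0)"

lemma e2_in: "i < n \<Longrightarrow> e2 i \<in> mindex2 n"
proof -
  assume "i < n"
  then have "(\<Sum>k<n. e2 i k) = (\<Sum>k\<in>{i}. e2 i k)"
    by (intro sum.mono_neutral_right) (auto simp: e2_def)
  then show ?thesis using \<open>i<n\<close> by (auto simp: mindex2_def e2_def)
qed

lemma inj_e2: "inj e2"
  by (rule injI) (metis e2_def numeral_2_eq_2 nat.distinct(1))

lemma mindex2_ne: "n > 0 \<Longrightarrow> mindex2 n \<noteq> {}"
  using e2_in by blast

lemma ball_comp_le:
  fixes x :: "nat \<Rightarrow> 'a::real_normed_field"
  assumes "sqrt (\<Sum>i<n. (norm (x i))\<^sup>2) \<le> 1" "k < n"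
  shows "norm (x k) \<le> 1"
proof -
  have "(\<Sum>i<n. (norm (x i))\<^sup>2) \<le> 1" using assms(1) by simp
  moreover have "(norm (x k))\<^sup>2 \<le> (\<Sum>i<n. (norm (x i))\<^sup>2)"
    using assms(2) by (intro member_le_sum) auto
  ultimately have "(norm (x k))\<^sup>2 \<le> 1" by linarith
  then show ?thesis by (simp add: power_le_one_iff abs_square_le_1)
qed

lemma hpoly_bound:
  fixes x :: "nat \<Rightarrow> 'a::real_normed_field"
  assumes "sqrt (\<Sum>i<n. (norm (x i))\<^sup>2) \<le> 1"
  shows "norm (hpoly2 n a x) \<le> (\<Sum>\<alpha>\<in>mindex2 n. norm (a \<alpha>))"
proof -
  have "norm (hpoly2 n a x) \<le> (\<Sum>\<alpha>\<in>mindex2 n. norm (a \<alpha> * (\<Prod>i<n. x i ^ \<alpha> i)))"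
    unfolding hpoly2_def by (rule norm_sum)
  also have "\<dots> \<le> (\<Sum>\<alpha>\<in>mindex2 n. norm (a \<alpha>))"
  proof (rule sum_mono)
    fix \<alpha>
    have "(\<Prod>i<n. norm (x i) ^ \<alpha> i) \<le> 1"
      using ball_comp_le[OF assms] by (intro prod_le_1) (auto simp: power_le_one)
    then show "norm (a \<alpha> * (\<Prod>i<n. x i ^ \<alpha> i)) \<le> norm (a \<alpha>)"
      by (simp add: norm_mult prod_norm[symmetric] norm_power mult_left_le)
  qed
  finally show ?thesis .
qed

lemma polynorm_ge:
  fixes x :: "nat \<Rightarrow> 'a::real_normed_field"
  assumes "sqrt (\<Sum>i<n. (norm (x i))\<^sup>2) \<le> 1"
  shows "norm (hpoly2 n a x) \<le> polynorm n a"
  unfolding polynorm_def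
  by (rule cSUP_upper) (use assms hpoly_bound in \<open>auto intro!: bdd_aboveI2\<close>)


lemma mindex2_eqI:
  assumes "\<alpha> \<in> mindex2 n" "\<beta> \<in> mindex2 n" "\<forall>k<n. \<alpha> k = \<beta> k"
  shows "\<alpha> = \<beta>"
proof
  fix k show "\<alpha> k = \<beta> k"
    using assms by (cases "k < n") (auto simp: mindex2_def)
qed

lemma diag_bound:
  fixes a :: "(nat \<Rightarrow> nat) \<Rightarrow> 'a::real_normed_field"
  assumes A: "\<alpha> \<in> mindex2 n" and i: "i < n" and Z: "\<forall>k<n. k \<noteq> i \<longrightarrow> \<alpha> k = 0"
  shows "norm (a \<alpha>) \<le> polynorm n a"
proof -
  define x :: "nat \<Rightarrow> 'a" where "x = (\<lambda>k. if k = i then 1 else 0)"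
  have "(\<Sum>k<n. (norm (x k))\<^sup>2) = (\<Sum>k\<in>{i}. (norm (x k))\<^sup>2)"
    by (rule sum.mono_neutral_right) (auto simp: x_def i)
  then have ball: "sqrt (\<Sum>k<n. (norm (x k))\<^sup>2) \<le> 1" by (simp add: x_def)
  have m: "(\<Prod>k<n. x k ^ \<beta> k) = (if \<beta> = \<alpha> then 1 else 0)" if B: "\<beta> \<in> mindex2 n" for \<beta>
  proof (cases "\<forall>k<n. k \<noteq> i \<longrightarrow> \<beta> k = 0")
    case True
    have "\<beta> i = 2" "\<alpha> i = 2" using mindex2_two[OF B i i] mindex2_two[OF A i i] True Z by auto
    then have "\<beta> = \<alpha>" using True Z by (intro mindex2_eqI[OF B A]) metis
    moreover have "(\<Prod>k<n. x k ^ \<beta> k) = 1"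
      by (rule prod.neutral) (use True in \<open>auto simp: x_def\<close>)
    ultimately show ?thesis by simp
  next
    case False
    then obtain k where k: "k < n" "k \<noteq> i" "\<beta> k \<noteq> 0" by auto
    then have "\<beta> \<noteq> \<alpha>" using Z by auto
    moreover have "(\<Prod>k<n. x k ^ \<beta> k) = 0"
      by (rule prod_zero) (use k in \<open>auto simp: x_def\<close>)
    ultimately show ?thesis by simp
  qed
  have "hpoly2 n a x = (\<Sum>\<beta>\<in>mindex2 n. if \<beta> = \<alpha> then a \<beta> else 0)"
    unfolding hpoly2_def by (rule sum.cong) (auto simp: m)
  also have "\<dots> = a \<alpha>" using A finite_mindex2 by simp
  finally show ?thesis using polynorm_ge[OF ball, of a] by simp
qed

lemma off_bound:
  fixes a :: "(nat \<Rightarrow> nat) \<Rightarrow> 'a::real_normed_field"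
  assumes A: "\<alpha> \<in> mindex2 n" and ij: "i < n" "j < n" "i \<noteq> j" and one: "\<alpha> i = 1" "\<alpha> j = 1"
    and Z: "\<forall>k<n. k \<noteq> i \<and> k \<noteq> j \<longrightarrow> \<alpha> k = 0"
  shows "norm (a \<alpha>) \<le> 2 * polynorm n a"
proof -
  define c :: 'a where "c = of_real (sqrt (1/2))"
  have cc: "c * c = of_real (1/2)" unfolding c_def of_real_mult[symmetric] by simp
  define x :: "'a \<Rightarrow> nat \<Rightarrow> 'a" where "x s = (\<lambda>k. if k = i then c else if k = j then s * c else 0)" for s
  have ball: "sqrt (\<Sum>k<n. (norm (x s k))\<^sup>2) \<le> 1" if s: "norm s = 1" for s
  proof -
    have "(\<Sum>k<n. (norm (x s k))\<^sup>2) = (\<Sum>k\<in>{i,j}. (norm (x s k))\<^sup>2)"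
      by (rule sum.mono_neutral_right) (auto simp: x_def ij)
    also have "\<dots> = 1" using ij s by (simp add: x_def c_def norm_mult power2_eq_square)
    finally show ?thesis by simp
  qed
  have m: "(\<Prod>k<n. x s k ^ \<beta> k) = (if \<forall>k<n. k \<noteq> i \<and> k \<noteq> j \<longrightarrow> \<beta> k = 0
            then c ^ \<beta> i * (s * c) ^ \<beta> j else 0)" for s \<beta>
  proof (cases "\<forall>k<n. k \<noteq> i \<and> k \<noteq> j \<longrightarrow> \<beta> k = 0")
    case True
    have "(\<Prod>k<n. x s k ^ \<beta> k) = (\<Prod>k\<in>{i,j}. x s k ^ \<beta> k)"
      by (rule prod.mono_neutral_right) (use True ij in \<open>auto simp: x_def\<close>)
    then show ?thesis using True ij by (simp add: x_def)
  next
    case False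
    then obtain k where k: "k < n" "k \<noteq> i" "k \<noteq> j" "\<beta> k \<noteq> 0" by auto
    have "(\<Prod>k<n. x s k ^ \<beta> k) = 0"
      by (rule prod_zero) (use k in \<open>auto simp: x_def\<close>)
    then show ?thesis by (subst if_not_P[OF False])
  qed
  have d: "(\<Prod>k<n. x 1 k ^ \<beta> k) - (\<Prod>k<n. x (-1) k ^ \<beta> k) = (if \<beta> = \<alpha> then 1 else 0)"
    if B: "\<beta> \<in> mindex2 n" for \<beta>
  proof (cases "\<forall>k<n. k \<noteq> i \<and> k \<noteq> j \<longrightarrow> \<beta> k = 0")
    case True
    have s2: "\<beta> i + \<beta> j = 2" using mindex2_two[OF B ij(1,2)] True ij by auto
    show ?thesis
    proof (cases "\<beta> j = 1")
      case True2: True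
      then have "\<beta> i = 1" using s2 by simp
      then have "\<beta> = \<alpha>" using True Z one True2 by (intro mindex2_eqI[OF B A]) metis
      have p1: "(\<Prod>k<n. x 1 k ^ \<beta> k) = c * c" using m[of 1 \<beta>] True \<open>\<beta> i = 1\<close> True2 by simp
      have p2: "(\<Prod>k<n. x (-1) k ^ \<beta> k) = - (c * c)" using m[of "-1" \<beta>] True \<open>\<beta> i = 1\<close> True2 by simp
      have h: "(2::'a) * of_real (1/2) = of_real (2 * (1/2))" by simp
      have "c * c - - (c * c) = 1" unfolding cc using h by (simp add: mult_2[symmetric])
      then show ?thesis using p1 p2 \<open>\<beta> = \<alpha>\<close> by simp
    next
      case False
      then have "\<beta> \<noteq> \<alpha>" using one by auto
      moreover have "\<beta> j = 0 \<or> \<beta> j = 2" using s2 False by auto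
      moreover have "(\<Prod>k<n. x 1 k ^ \<beta> k) = (\<Prod>k<n. x (-1) k ^ \<beta> k)"
        unfolding m[of 1 \<beta>] m[of "-1" \<beta>] using \<open>\<beta> j = 0 \<or> \<beta> j = 2\<close>
        by (auto simp: power_mult_distrib)
      ultimately show ?thesis by simp
    qed
  next
    case False
    then have "\<beta> \<noteq> \<alpha>" using Z by auto
    have z: "(\<Prod>k<n. x 1 k ^ \<beta> k) = 0" "(\<Prod>k<n. x (-1) k ^ \<beta> k) = 0"
      using m[of 1 \<beta>] m[of "-1" \<beta>] if_not_P[OF False] by metis+
    show ?thesis unfolding z using \<open>\<beta> \<noteq> \<alpha>\<close> by simp
  qed
  have "hpoly2 n a (x 1) - hpoly2 n a (x (-1))
      = (\<Sum>\<beta>\<in>mindex2 n. a \<beta> * ((\<Prod>k<n. x 1 k ^ \<beta> k) - (\<Prod>k<n. x (-1) k ^ \<beta> k)))"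
    unfolding hpoly2_def by (simp add: sum_subtractf[symmetric] right_diff_distrib)
  also have "\<dots> = (\<Sum>\<beta>\<in>mindex2 n. if \<beta> = \<alpha> then a \<beta> else 0)"
    by (rule sum.cong) (auto simp: d)
  also have "\<dots> = a \<alpha>" using A finite_mindex2 by simp
  finally have "norm (a \<alpha>) \<le> norm (hpoly2 n a (x 1)) + norm (hpoly2 n a (x (-1)))"
    by (metis norm_triangle_ineq4)
  also have "\<dots> \<le> polynorm n a + polynorm n a"
    by (intro add_mono polynorm_ge ball) auto
  finally show ?thesis by simp
qed


lemma polynorm_nonneg: "polynorm n (a :: (nat \<Rightarrow> nat) \<Rightarrow> 'a::real_normed_field) \<ge> 0"
proof -
  have "sqrt (\<Sum>i<n. (norm ((\<lambda>_. 0::'a) i))\<^sup>2) \<le> 1" by simp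
  from polynorm_ge[OF this, of a] show ?thesis by (meson norm_ge_zero order_trans)
qed

lemma coeff_bound:
  fixes a :: "(nat \<Rightarrow> nat) \<Rightarrow> 'a::real_normed_field"
  assumes A: "\<alpha> \<in> mindex2 n"
  shows "norm (a \<alpha>) \<le> 2 * polynorm n a"
proof -
  have S: "(\<Sum>k<n. \<alpha> k) = 2" using A by (simp add: mindex2_def)
  then obtain i where i: "i < n" "\<alpha> i \<noteq> 0"
    by (metis lessThan_iff sum.neutral zero_neq_numeral)
  have sp: "(\<Sum>k<n. \<alpha> k) = \<alpha> i + (\<Sum>k\<in>{..<n}-{i}. \<alpha> k)"
    using i by (simp add: sum.remove)
  have "\<alpha> i \<le> 2" using mindex2_le[OF A i(1)] .
  then consider "\<alpha> i = 2" | "\<alpha> i = 1" using i by linarith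
  then show ?thesis
  proof cases
    case 1
    then have "(\<Sum>k\<in>{..<n}-{i}. \<alpha> k) = 0" using S sp by simp
    then have "\<forall>k<n. k \<noteq> i \<longrightarrow> \<alpha> k = 0" by simp
    from diag_bound[OF A i(1) this, of a] polynorm_nonneg[of n a] show ?thesis by linarith
  next
    case 2
    then have R: "(\<Sum>k\<in>{..<n}-{i}. \<alpha> k) = 1" using S sp by simp
    then obtain j where j: "j \<in> {..<n}-{i}" "\<alpha> j \<noteq> 0"
      by (metis sum.neutral zero_neq_one)
    have sp2: "(\<Sum>k\<in>{..<n}-{i}. \<alpha> k) = \<alpha> j + (\<Sum>k\<in>{..<n}-{i}-{j}. \<alpha> k)"
      using j by (simp add: sum.remove)
    then have "\<alpha> j = 1" "(\<Sum>k\<in>{..<n}-{i}-{j}. \<alpha> k) = 0" using R j by linarith+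
    then have Z: "\<forall>k<n. k \<noteq> i \<and> k \<noteq> j \<longrightarrow> \<alpha> k = 0" by simp
    show ?thesis using off_bound[OF A i(1) _ _ 2 \<open>\<alpha> j = 1\<close> Z] j by auto
  qed
qed

lemma max_bound:
  fixes a :: "(nat \<Rightarrow> nat) \<Rightarrow> 'a::real_normed_field"
  assumes "n > 0"
  shows "Max ((\<lambda>\<alpha>. norm (a \<alpha>)) ` mindex2 n) \<le> 4 * sqrt 2 * polynorm n a"
proof -
  have "1 \<le> sqrt (2::real)" by simp
  then have "2 \<le> 4 * sqrt (2::real)" by linarith
  then have "2 * polynorm n a \<le> 4 * sqrt 2 * polynorm n a"
    using polynorm_nonneg[of n a] by (intro mult_right_mono) auto
  then have "\<forall>\<alpha>\<in>mindex2 n. norm (a \<alpha>) \<le> 4 * sqrt 2 * polynorm n a"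
    using coeff_bound[of _ n a] by (meson order_trans)
  then show ?thesis
    using finite_mindex2[of n] mindex2_ne[OF assms] by (subst Max_le_iff) auto
qed

lemma no_const:
  fixes r C :: real
  assumes r: "r > 0" and C: "C \<ge> 1"
  shows "\<exists>n>0. \<exists>a::(nat \<Rightarrow> nat) \<Rightarrow> 'a::real_normed_field.
     \<not> ((\<Sum>\<alpha>\<in>mindex2 n. norm (a \<alpha>) powr r) powr (1 / r) \<le> C * polynorm n a)"
proof -
  define n where "n = nat \<lceil>C powr r\<rceil> + 1"
  have n0: "n > 0" by (simp add: n_def)
  have nC: "real n > C powr r" unfolding n_def by linarith
  define E where "E = e2 ` {..<n}"
  have E: "E \<subseteq> mindex2 n" using e2_in by (auto simp: E_def)
  define a :: "(nat \<Rightarrow> nat) \<Rightarrow> 'a" where "a = (\<lambda>\<alpha>. if \<alpha> \<in> E then 1 else 0)"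
  have "(\<Sum>\<alpha>\<in>mindex2 n. norm (a \<alpha>) powr r) = (\<Sum>\<alpha>\<in>E. norm (a \<alpha>) powr r)"
    by (rule sum.mono_neutral_right) (use E finite_mindex2 in \<open>auto simp: a_def\<close>)
  also have "\<dots> = (\<Sum>\<alpha>\<in>E. 1)" by (rule sum.cong) (auto simp: a_def)
  also have "\<dots> = real (card E)" by simp
  also have "card E = n" unfolding E_def by (simp add: card_image inj_on_subset[OF inj_e2])
  finally have sumeq: "(\<Sum>\<alpha>\<in>mindex2 n. norm (a \<alpha>) powr r) = real n" .
  have pn: "polynorm n a \<le> 1"
    unfolding polynorm_def
  proof (rule cSUP_least)
    show "{x::nat \<Rightarrow> 'a. sqrt (\<Sum>i<n. (norm (x i))\<^sup>2) \<le> 1} \<noteq> {}"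
    proof -
      have "(\<lambda>_. 0) \<in> {x::nat \<Rightarrow> 'a. sqrt (\<Sum>i<n. (norm (x i))\<^sup>2) \<le> 1}" by simp
      then show ?thesis by (metis empty_iff)
    qed
  next
    fix x :: "nat \<Rightarrow> 'a" assume "x \<in> {x. sqrt (\<Sum>i<n. (norm (x i))\<^sup>2) \<le> 1}"
    then have b: "(\<Sum>i<n. (norm (x i))\<^sup>2) \<le> 1" by simp
    have "hpoly2 n a x = (\<Sum>\<beta>\<in>E. (\<Prod>i<n. x i ^ \<beta> i))"
      unfolding hpoly2_def
      by (rule sum.mono_neutral_cong_right[OF finite_mindex2 E]) (simp_all add: a_def)
    also have "\<dots> = (\<Sum>j<n. (\<Prod>i<n. x i ^ e2 j i))"
      unfolding E_def by (simp add: sum.reindex inj_on_subset[OF inj_e2])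
    also have "\<dots> = (\<Sum>j<n. x j ^ 2)"
    proof (rule sum.cong)
      fix j assume "j \<in> {..<n}"
      have "(\<Prod>i<n. x i ^ e2 j i) = (\<Prod>i<n. if i = j then x i ^ 2 else 1)"
        by (rule prod.cong) (auto simp: e2_def)
      then show "(\<Prod>i<n. x i ^ e2 j i) = x j ^ 2" using \<open>j \<in> {..<n}\<close> by simp
    qed simp
    finally have "norm (hpoly2 n a x) \<le> (\<Sum>j<n. norm (x j ^ 2))"
      by (metis norm_sum)
    also have "\<dots> = (\<Sum>j<n. (norm (x j))\<^sup>2)" by (simp add: norm_power)
    finally show "norm (hpoly2 n a x) \<le> 1" using b by linarith
  qed
  have "C = (C powr r) powr (1/r)" using r C by (simp add: powr_powr)
  also have "\<dots> < real n powr (1/r)"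
    using nC r by (intro powr_less_mono2) auto
  finally have "C < real n powr (1/r)" .
  moreover have "C * polynorm n a \<le> C" using pn C by (simp add: mult_left_le)
  ultimately show ?thesis using n0 sumeq by (intro exI[of _ n] conjI exI[of _ a]) auto
qed



theorem proposition2:
  shows "(\<forall>n>0. \<forall>a::(nat \<Rightarrow> nat) \<Rightarrow> real.
            Max ((\<lambda>\<alpha>. norm (a \<alpha>)) ` mindex2 n) \<le> 4 * sqrt 2 * polynorm n a)
       \<and> (\<forall>n>0. \<forall>a::(nat \<Rightarrow> nat) \<Rightarrow> complex.
            Max ((\<lambda>\<alpha>. norm (a \<alpha>)) ` mindex2 n) \<le> 4 * sqrt 2 * polynorm n a)
       \<and> (\<forall>r::real>0. \<not> (\<exists>C::real\<ge>1. \<forall>n>0. \<forall>a::(nat \<Rightarrow> nat) \<Rightarrow> real.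
            (\<Sum>\<alpha>\<in>mindex2 n. norm (a \<alpha>) powr r) powr (1 / r) \<le> C * polynorm n a))
       \<and> (\<forall>r::real>0. \<not> (\<exists>C::real\<ge>1. \<forall>n>0. \<forall>a::(nat \<Rightarrow> nat) \<Rightarrow> complex.
            (\<Sum>\<alpha>\<in>mindex2 n. norm (a \<alpha>) powr r) powr (1 / r) \<le> C * polynorm n a))"
proof (intro conjI allI impI)
  fix n :: nat and a :: "(nat \<Rightarrow> nat) \<Rightarrow> real" assume "n > 0"
  then show "Max ((\<lambda>\<alpha>. norm (a \<alpha>)) ` mindex2 n) \<le> 4 * sqrt 2 * polynorm n a" by (rule max_bound)
next
  fix n :: nat and a :: "(nat \<Rightarrow> nat) \<Rightarrow> complex" assume "n > 0"
  then show "Max ((\<lambda>\<alpha>. norm (a \<alpha>)) ` mindex2 n) \<le> 4 * sqrt 2 * polynorm n a" by (rule max_bound)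
next
  fix r :: real assume "r > 0"
  then show "\<not> (\<exists>C::real\<ge>1. \<forall>n>0. \<forall>a::(nat \<Rightarrow> nat) \<Rightarrow> real.
            (\<Sum>\<alpha>\<in>mindex2 n. norm (a \<alpha>) powr r) powr (1 / r) \<le> C * polynorm n a)"
    using no_const[where 'a=real] by blast
next
  fix r :: real assume "r > 0"
  then show "\<not> (\<exists>C::real\<ge>1. \<forall>n>0. \<forall>a::(nat \<Rightarrow> nat) \<Rightarrow> complex.
            (\<Sum>\<alpha>\<in>mindex2 n. norm (a \<alpha>) powr r) powr (1 / r) \<le> C * polynorm n a)"
    using no_const[where 'a=complex] by blast
qed

end
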